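(* Let $G$ be a periodic group and let $N$ be a normal subgroup of $G$. Assume that for every $x\in G$ the subgroup $[N,x]$ is a Chernikov group, and let $R_x$ denote its radicable part. Then the subgroup $R$ generated by all the subgroups $R_x$ ($x\in G$) is a radicable abelian normal subgroup of $G$.
   Context: For a subgroup $N$ and element $x$ of a group $G$, $[N,x]$ is the subgroup generated by all commutators $[a,x]=a^{-1}x^{-1}ax$ with $a\in N$. A group is radicable if every equation $x^r=a$ ($r$ a positive integer, $a$ in the group) has a solution in the group. A Chernikov group $H$ has a radicable abelian normal subgroup $R$ (its radicable part) which is a direct product of finitely many Prüfer groups $C_{p^\infty}$ and with $H/R$ finite. *)

theory Defs
  imports "HOL-Algebra.Algebra"
begin

(* The Pruefer p-group C_{p^\<infinity>}, modelled as the rationals in [0,1) whose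
   denominator is a power of p, under addition modulo 1. *)
definition prufer_group :: "nat \<Rightarrow> rat monoid" where
  "prufer_group p = \<lparr>carrier = {q. 0 \<le> q \<and> q < 1 \<and> (\<exists>n::nat. q * of_nat (p ^ n) \<in> \<int>)},
                     monoid.mult = (\<lambda>a b. a + b - of_int \<lfloor>a + b\<rfloor>),
                     one = 0\<rparr>"

definition commutator :: "('a, 'b) monoid_scheme \<Rightarrow> 'a \<Rightarrow> 'a \<Rightarrow> 'a" where
  "commutator G a x = inv\<^bsub>G\<^esub> a \<otimes>\<^bsub>G\<^esub> inv\<^bsub>G\<^esub> x \<otimes>\<^bsub>G\<^esub> a \<otimes>\<^bsub>G\<^esub> x"

definition comm_subgroup :: "('a, 'b) monoid_scheme \<Rightarrow> 'a set \<Rightarrow> 'a \<Rightarrow> 'a set" where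
  "comm_subgroup G N x = generate G {commutator G a x | a. a \<in> N}"

definition periodic_group :: "('a, 'b) monoid_scheme \<Rightarrow> bool" where
  "periodic_group G \<longleftrightarrow> (\<forall>x \<in> carrier G. \<exists>n::nat. n > 0 \<and> x [^]\<^bsub>G\<^esub> n = \<one>\<^bsub>G\<^esub>)"

definition radicable :: "('a, 'b) monoid_scheme \<Rightarrow> 'a set \<Rightarrow> bool" where
  "radicable G S \<longleftrightarrow> (\<forall>r::nat. r > 0 \<longrightarrow> (\<forall>a \<in> S. \<exists>y \<in> S. y [^]\<^bsub>G\<^esub> r = a))"

definition abelian_set :: "('a, 'b) monoid_scheme \<Rightarrow> 'a set \<Rightarrow> bool" where
  "abelian_set G S \<longleftrightarrow> (\<forall>a \<in> S. \<forall>b \<in> S. a \<otimes>\<^bsub>G\<^esub> b = b \<otimes>\<^bsub>G\<^esub> a)"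

definition chernikov :: "('a, 'b) monoid_scheme \<Rightarrow> 'a set \<Rightarrow> bool" where
  "chernikov G H \<longleftrightarrow> subgroup H G \<and>
     (\<exists>R. R \<lhd> G\<lparr>carrier := H\<rparr> \<and> radicable G R \<and> abelian_set G R \<and>
          (\<exists>(k::nat) (p::nat \<Rightarrow> nat). (\<forall>i<k. Factorial_Ring.prime (p i)) \<and>
              G\<lparr>carrier := R\<rparr> \<cong> product_group {..<k} (\<lambda>i. prufer_group (p i))) \<and>
          finite (carrier (G\<lparr>carrier := H\<rparr> Mod R)))"

(* radicable part of H: the largest radicable subgroup of H, i.e. the subgroup generated
   by all radicable subgroups of H (for a Chernikov group this is the R above) *)
definition radicable_part :: "('a, 'b) monoid_scheme \<Rightarrow> 'a set \<Rightarrow> 'a set" where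
  "radicable_part G H = generate G (\<Union>{S. subgroup S G \<and> S \<subseteq> H \<and> radicable G S})"

end

theory Submission
  imports Defs
begin


context group begin

lemma inv_cancel_l [simp]: "x \<in> carrier G \<Longrightarrow> y \<in> carrier G \<Longrightarrow> inv x \<otimes> (x \<otimes> y) = y"
  by (simp add: m_assoc[symmetric])
lemma inv_cancel_r [simp]: "x \<in> carrier G \<Longrightarrow> y \<in> carrier G \<Longrightarrow> x \<otimes> (inv x \<otimes> y) = y"
  by (simp add: m_assoc[symmetric])

lemma inv_conj: "s \<in> carrier G \<Longrightarrow> g \<in> carrier G \<Longrightarrow> inv (g \<otimes> s \<otimes> inv g) = g \<otimes> inv s \<otimes> inv g"
  by (simp add: inv_mult_group m_assoc)

lemma conj_generate:
  assumes "A \<subseteq> carrier G" "B \<subseteq> carrier G" "g \<in> carrier G"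
    and "\<And>a. a \<in> A \<Longrightarrow> g \<otimes> a \<otimes> inv g \<in> generate G B"
    and "h \<in> generate G A"
  shows "g \<otimes> h \<otimes> inv g \<in> generate G B"
  using assms(5)
proof (induction rule: generate.induct)
  case one then show ?case using assms(3) by (simp add: generate.one)
next
  case (incl h) then show ?case using assms(4) by blast
next
  case (inv h)
  have hc: "h \<in> carrier G" using inv assms(1) by auto
  have "g \<otimes> inv h \<otimes> inv g = inv (g \<otimes> h \<otimes> inv g)"
    using hc assms(3) by (simp add: inv_mult_group m_assoc)
  then show ?case using generate_m_inv_closed[OF assms(2) assms(4)[OF inv]] by simp
next
  case (eng h1 h2)
  have c: "h1 \<in> carrier G" "h2 \<in> carrier G"
    using eng(1,2) generate_in_carrier assms(1) by auto
  have "g \<otimes> (h1 \<otimes> h2) \<otimes> inv g = (g \<otimes> h1 \<otimes> inv g) \<otimes> (g \<otimes> h2 \<otimes> inv g)"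
    using c assms(3) by (simp add: m_assoc)
  then show ?case using generate.eng[OF eng(3,4)] by simp
qed

lemma conj_pow:
  assumes "g \<in> carrier G" "s \<in> carrier G"
  shows "(g \<otimes> s \<otimes> inv g) [^] (n::nat) = g \<otimes> s [^] n \<otimes> inv g"
proof (induction n)
  case 0 then show ?case using assms by simp
next
  case (Suc n)
  then show ?case using assms by (simp add: m_assoc)
qed

lemma conj_radicable_subgroup:
  assumes "subgroup S G" "radicable G S" "g \<in> carrier G"
  shows "subgroup ((\<lambda>s. g \<otimes> s \<otimes> inv g) ` S) G \<and> radicable G ((\<lambda>s. g \<otimes> s \<otimes> inv g) ` S)"
proof
  have Sc: "S \<subseteq> carrier G" using assms(1) subgroup.subset by blast
  show "subgroup ((\<lambda>s. g \<otimes> s \<otimes> inv g) ` S) G"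
  proof (rule subgroupI)
    show "(\<lambda>s. g \<otimes> s \<otimes> inv g) ` S \<subseteq> carrier G" using Sc assms(3) by auto
    show "(\<lambda>s. g \<otimes> s \<otimes> inv g) ` S \<noteq> {}" using subgroup.one_closed[OF assms(1)] by auto
  next
    fix a assume "a \<in> (\<lambda>s. g \<otimes> s \<otimes> inv g) ` S"
    then obtain s where s: "s \<in> S" "a = g \<otimes> s \<otimes> inv g" by blast
    have sc: "s \<in> carrier G" using s(1) Sc by blast
    have e: "inv a = g \<otimes> inv s \<otimes> inv g" using inv_conj[OF sc assms(3)] s(2) by simp
    have m: "inv s \<in> S" using subgroup.m_inv_closed[OF assms(1) s(1)] .
    show "inv a \<in> (\<lambda>s. g \<otimes> s \<otimes> inv g) ` S"
      unfolding e by (rule imageI[OF m])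
  next
    fix a b assume "a \<in> (\<lambda>s. g \<otimes> s \<otimes> inv g) ` S" "b \<in> (\<lambda>s. g \<otimes> s \<otimes> inv g) ` S"
    then obtain s t where s: "s \<in> S" "a = g \<otimes> s \<otimes> inv g" "t \<in> S" "b = g \<otimes> t \<otimes> inv g" by blast
    have c: "s \<in> carrier G" "t \<in> carrier G" using s(1,3) Sc by auto
    have e: "a \<otimes> b = g \<otimes> (s \<otimes> t) \<otimes> inv g"
      unfolding s(2,4) using c assms(3) by (simp add: m_assoc)
    have m: "s \<otimes> t \<in> S" using subgroup.m_closed[OF assms(1) s(1,3)] .
    show "a \<otimes> b \<in> (\<lambda>s. g \<otimes> s \<otimes> inv g) ` S"
      unfolding e by (rule imageI[OF m])
  qed
  show "radicable G ((\<lambda>s. g \<otimes> s \<otimes> inv g) ` S)"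
    unfolding radicable_def
  proof (intro allI impI ballI)
    fix r :: nat and a assume r: "r > 0" and "a \<in> (\<lambda>s. g \<otimes> s \<otimes> inv g) ` S"
    then obtain s where s: "s \<in> S" "a = g \<otimes> s \<otimes> inv g" by blast
    obtain y where y: "y \<in> S" "y [^] r = s" using assms(2) r s(1) unfolding radicable_def by blast
    have yc: "y \<in> carrier G" using y(1) Sc by blast
    have "(g \<otimes> y \<otimes> inv g) [^] r = a" unfolding s(2) conj_pow[OF assms(3) yc, of r] y(2) ..
    moreover have "g \<otimes> y \<otimes> inv g \<in> (\<lambda>s. g \<otimes> s \<otimes> inv g) ` S" using y(1) by (rule imageI)
    ultimately show "\<exists>y\<in>(\<lambda>s. g \<otimes> s \<otimes> inv g) ` S. y [^] r = a" by (rule bexI)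
  qed
qed


lemma pow_commute:
  assumes "x \<in> carrier G" "y \<in> carrier G" "x \<otimes> y = y \<otimes> x"
  shows "x [^] (n::nat) \<otimes> y = y \<otimes> x [^] n"
proof (induction n)
  case 0 then show ?case using assms by simp
next
  case (Suc n)
  have "x [^] Suc n \<otimes> y = x [^] n \<otimes> (x \<otimes> y)" using assms by (simp add: m_assoc)
  also have "\<dots> = (x [^] n \<otimes> y) \<otimes> x" using assms by (simp add: m_assoc)
  also have "\<dots> = y \<otimes> x [^] Suc n" using Suc assms by (simp add: m_assoc)
  finally show ?case .
qed

lemma commute_lemma:
  assumes sA: "subgroup A G" and sB: "subgroup B G"
    and abA: "abelian_set G A" and abB: "abelian_set G B" and radA: "radicable G A"
    and nA: "\<And>d b. d \<in> A \<Longrightarrow> b \<in> B \<Longrightarrow> inv b \<otimes> d \<otimes> b \<in> A"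
    and nB: "\<And>d b. d \<in> A \<Longrightarrow> b \<in> B \<Longrightarrow> inv d \<otimes> b \<otimes> d \<in> B"
    and per: "\<And>b. b \<in> B \<Longrightarrow> \<exists>k::nat. k > 0 \<and> b [^] k = \<one>"
    and a: "a \<in> A" and b: "b \<in> B"
  shows "a \<otimes> b = b \<otimes> a"
proof -
  obtain k :: nat where k: "k > 0" "b [^] k = \<one>" using per[OF b] by blast
  obtain d where d: "d \<in> A" "d [^] k = a" using radA k(1) a unfolding radicable_def by blast
  have Ac: "A \<subseteq> carrier G" using sA subgroup.subset by blast
  have Bc: "B \<subseteq> carrier G" using sB subgroup.subset by blast
  have dc: "d \<in> carrier G" using d(1) Ac by blast
  have bc: "b \<in> carrier G" using b Bc by blast
  define e where "e = inv d \<otimes> (inv b \<otimes> d \<otimes> b)"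
  have eA: "e \<in> A" unfolding e_def
    using subgroup.m_closed[OF sA subgroup.m_inv_closed[OF sA d(1)] nA[OF d(1) b]] .
  have e2: "e = (inv d \<otimes> inv b \<otimes> d) \<otimes> b" unfolding e_def using dc bc by (simp add: m_assoc)
  have "inv d \<otimes> inv b \<otimes> d \<in> B" using nB[OF d(1) subgroup.m_inv_closed[OF sB b]] .
  then have eB: "e \<in> B" unfolding e2 using subgroup.m_closed[OF sB _ b] by blast
  have ec: "e \<in> carrier G" using eA Ac by blast
  have de: "d \<otimes> e = e \<otimes> d" using abA d(1) eA unfolding abelian_set_def by blast
  have be: "b \<otimes> e = e \<otimes> b" using abB b eB unfolding abelian_set_def by blast
  have key1: "d \<otimes> b = b \<otimes> (d \<otimes> e)" unfolding e_def using dc bc by (simp add: m_assoc)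
  have key2: "d \<otimes> b [^] n = b [^] n \<otimes> (d \<otimes> e [^] n)" for n :: nat
  proof (induction n)
    case 0 then show ?case using dc by simp
  next
    case (Suc n)
    have ebn: "e [^] n \<otimes> b = b \<otimes> e [^] n" using pow_commute[OF ec bc be[symmetric]] .
    have een: "e \<otimes> e [^] n = e [^] n \<otimes> e" by (metis nat_pow_Suc nat_pow_Suc2 ec)
    have "d \<otimes> b [^] Suc n = (d \<otimes> b [^] n) \<otimes> b" using dc bc by (simp add: m_assoc)
    also have "\<dots> = b [^] n \<otimes> d \<otimes> (e [^] n \<otimes> b)" using Suc dc bc ec by (simp add: m_assoc)
    also have "\<dots> = b [^] n \<otimes> (d \<otimes> b) \<otimes> e [^] n" unfolding ebn using dc bc ec by (simp add: m_assoc)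
    also have "\<dots> = b [^] n \<otimes> b \<otimes> d \<otimes> (e \<otimes> e [^] n)" unfolding key1 using dc bc ec by (simp add: m_assoc)
    also have "\<dots> = b [^] Suc n \<otimes> (d \<otimes> e [^] Suc n)" using dc bc ec een by (simp add: m_assoc)
    finally show ?case .
  qed
  have "d = d \<otimes> e [^] k" using key2[of k] k(2) dc ec by simp
  then have ek: "e [^] k = \<one>" using dc ec by simp
  have key3: "d [^] n \<otimes> b = b \<otimes> (d \<otimes> e) [^] n" for n :: nat
  proof (induction n)
    case 0 then show ?case using bc by simp
  next
    case (Suc n)
    have "d [^] Suc n \<otimes> b = d [^] n \<otimes> (d \<otimes> b)" using dc bc by (simp add: m_assoc)
    also have "\<dots> = (d [^] n \<otimes> b) \<otimes> (d \<otimes> e)" unfolding key1 using dc bc ec by (simp add: m_assoc)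
    also have "\<dots> = b \<otimes> (d \<otimes> e) [^] Suc n" unfolding Suc using dc bc ec by (simp add: m_assoc)
    finally show ?case .
  qed
  have "(d \<otimes> e) [^] k = d [^] k" using pow_mult_distrib[OF de dc ec, of k] ek dc by simp
  then show ?thesis using key3[of k] d(2) by simp
qed

lemma gen_comm_elem:
  assumes "U \<subseteq> carrier G" "u \<in> carrier G" "\<And>v. v \<in> U \<Longrightarrow> u \<otimes> v = v \<otimes> u"
    and "h \<in> generate G U"
  shows "u \<otimes> h = h \<otimes> u"
  using assms(4)
proof (induction rule: generate.induct)
  case one then show ?case using assms(2) by simp
next
  case (incl h) then show ?case using assms(3) by blast
next
  case (inv v)
  have vc: "v \<in> carrier G" using inv assms(1) by blast
  have "inv v \<otimes> (u \<otimes> v) \<otimes> inv v = inv v \<otimes> (v \<otimes> u) \<otimes> inv v" using assms(3)[OF inv] by simp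
  then show ?case using vc assms(2) by (simp add: m_assoc)
next
  case (eng h1 h2)
  have c: "h1 \<in> carrier G" "h2 \<in> carrier G"
    using eng(1,2) generate_in_carrier assms(1) by auto
  have "u \<otimes> (h1 \<otimes> h2) = (u \<otimes> h1) \<otimes> h2" using c assms(2) by (simp add: m_assoc)
  also have "\<dots> = h1 \<otimes> (u \<otimes> h2)" unfolding eng(3) using c assms(2) by (simp add: m_assoc)
  also have "\<dots> = h1 \<otimes> h2 \<otimes> u" unfolding eng(4) using c assms(2) by (simp add: m_assoc)
  finally show ?case .
qed

lemma gen_abelian:
  assumes "U \<subseteq> carrier G" "\<And>u v. u \<in> U \<Longrightarrow> v \<in> U \<Longrightarrow> u \<otimes> v = v \<otimes> u"
  shows "abelian_set G (generate G U)"
  unfolding abelian_set_def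
proof (intro ballI)
  fix h h' assume h: "h \<in> generate G U" and h': "h' \<in> generate G U"
  have hc: "h \<in> carrier G" using generate_in_carrier[OF assms(1) h] .
  have "h \<otimes> v = v \<otimes> h" if "v \<in> U" for v
  proof -
    have "v \<otimes> h = h \<otimes> v"
      using gen_comm_elem[OF assms(1) _ _ h, of v] that assms by blast
    then show ?thesis by simp
  qed
  then show "h \<otimes> h' = h' \<otimes> h" using gen_comm_elem[OF assms(1) hc _ h'] by blast
qed

lemma gen_radicable:
  assumes "U \<subseteq> carrier G" "abelian_set G (generate G U)"
    and "\<And>u r. u \<in> U \<Longrightarrow> (r::nat) > 0 \<Longrightarrow> \<exists>y \<in> generate G U. y [^] r = u"
  shows "radicable G (generate G U)"
  unfolding radicable_def
proof (intro allI impI ballI)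
  fix r :: nat and a assume r: "r > 0" and a: "a \<in> generate G U"
  from a show "\<exists>y \<in> generate G U. y [^] r = a"
  proof (induction rule: generate.induct)
    case one then show ?case by (rule bexI[of _ "\<one>"]) (simp_all add: generate.one)
  next
    case (incl h) then show ?case using assms(3) r by blast
  next
    case (inv h)
    obtain y where y: "y \<in> generate G U" "y [^] r = h" using assms(3)[OF inv r] by blast
    have yc: "y \<in> carrier G" using generate_in_carrier[OF assms(1) y(1)] .
    have "inv y \<in> generate G U" using generate_m_inv_closed[OF assms(1) y(1)] .
    moreover have "(inv y) [^] r = inv h" using nat_pow_inv[OF yc, of r] y(2) by simp
    ultimately show ?case by (rule bexI[rotated])
  next
    case (eng h1 h2)
    obtain y1 where y1: "y1 \<in> generate G U" "y1 [^] r = h1" using eng(3) by blast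
    obtain y2 where y2: "y2 \<in> generate G U" "y2 [^] r = h2" using eng(4) by blast
    have c: "y1 \<in> carrier G" "y2 \<in> carrier G"
      using generate_in_carrier[OF assms(1)] y1(1) y2(1) by auto
    have cm: "y1 \<otimes> y2 = y2 \<otimes> y1" using assms(2) y1(1) y2(1) unfolding abelian_set_def by blast
    have "(y1 \<otimes> y2) [^] r = h1 \<otimes> h2" using pow_mult_distrib[OF cm c, of r] y1(2) y2(2) by simp
    moreover have "y1 \<otimes> y2 \<in> generate G U" using generate.eng[OF y1(1) y2(1)] .
    ultimately show ?case by (rule bexI)
  qed
qed

lemma comm_conj:
  assumes "a \<in> carrier G" "x \<in> carrier G" "g \<in> carrier G"
  shows "commutator G (g \<otimes> a \<otimes> inv g) (g \<otimes> x \<otimes> inv g) = g \<otimes> commutator G a x \<otimes> inv g"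
  unfolding commutator_def using assms by (simp add: inv_mult_group m_assoc)

lemma comm_N:
  assumes "a \<in> carrier G" "x \<in> carrier G" "b \<in> carrier G"
  shows "inv b \<otimes> commutator G a x \<otimes> b = commutator G (a \<otimes> b) x \<otimes> inv (commutator G b x)"
  unfolding commutator_def using assms by (simp add: inv_mult_group m_assoc)

end

lemma radpart_chernikov:
  assumes grp: "group G" and ch: "chernikov G H"
  shows "subgroup (radicable_part G H) G \<and> radicable_part G H \<subseteq> H
       \<and> radicable G (radicable_part G H) \<and> abelian_set G (radicable_part G H)"
proof -
  interpret group G by (rule grp)
  from ch obtain R where sH: "subgroup H G" and nR: "R \<lhd> G\<lparr>carrier := H\<rparr>"
    and radR: "radicable G R" and abR: "abelian_set G R"
    and fin: "finite (carrier (G\<lparr>carrier := H\<rparr> Mod R))"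
    unfolding chernikov_def by blast
  define K where "K = G\<lparr>carrier := H\<rparr>"
  have gK: "group K" unfolding K_def using sH subgroup.subgroup_is_group grp by blast
  have sRK: "subgroup R K" using nR normal_imp_subgroup K_def by blast
  have RH: "R \<subseteq> H" using subgroup.subset[OF sRK] K_def by simp
  have sRG: "subgroup R G" using incl_subgroup[OF sH] sRK K_def by blast
  have gQ: "group (K Mod R)" using normal.factorgroup_is_group nR K_def by blast
  define m where "m = order (K Mod R)"
  have m0: "m > 0" unfolding m_def using fin K_def
    by (metis gQ group.is_monoid monoid.order_gt_0_iff_finite)
  have key: "S \<subseteq> R" if hS: "subgroup S G" "S \<subseteq> H" "radicable G S" for S
  proof
    fix s assume s: "s \<in> S"
    obtain t where t: "t \<in> S" "t [^]\<^bsub>G\<^esub> m = s"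
      using hS(3) m0 s unfolding radicable_def by blast
    have tK: "t \<in> carrier K" using t hS(2) K_def by auto
    have "(R #>\<^bsub>K\<^esub> t) [^]\<^bsub>K Mod R\<^esub> m = R #>\<^bsub>K\<^esub> (t [^]\<^bsub>K\<^esub> m)"
      using normal.FactGroup_pow[OF nR[folded K_def] tK] by simp
    moreover have "(R #>\<^bsub>K\<^esub> t) [^]\<^bsub>K Mod R\<^esub> m = \<one>\<^bsub>K Mod R\<^esub>"
      unfolding m_def apply (rule group.pow_order_eq_1[OF gQ])
      using tK by (simp add: carrier_FactGroup)
    moreover have "t [^]\<^bsub>K\<^esub> m = s" using t nat_pow_consistent K_def by metis
    ultimately have "R #>\<^bsub>K\<^esub> s = R" by simp
    moreover have "s \<in> carrier K" using s hS(2) K_def by auto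
    ultimately show "s \<in> R" using group.rcos_self[OF gK _ sRK] by metis
  qed
  have "radicable_part G H = R"
  proof
    show "radicable_part G H \<subseteq> R" unfolding radicable_part_def
      using key sRG by (intro generate_subgroup_incl) auto
    show "R \<subseteq> radicable_part G H" unfolding radicable_part_def
      using sRG RH radR by (auto intro: generate.incl)
  qed
  then show ?thesis using sRG RH radR abR by simp
qed

theorem lemma2p4:
  fixes G (structure) and N :: "'a set"
  assumes "group G"
    and "periodic_group G"
    and "N \<lhd> G"
    and "\<And>x. x \<in> carrier G \<Longrightarrow> chernikov G (comm_subgroup G N x)"
  shows "generate G (\<Union>x \<in> carrier G. radicable_part G (comm_subgroup G N x)) \<lhd> G
       \<and> abelian_set G (generate G (\<Union>x \<in> carrier G. radicable_part G (comm_subgroup G N x)))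
       \<and> radicable G (generate G (\<Union>x \<in> carrier G. radicable_part G (comm_subgroup G N x)))"
proof -
  interpret group G by (rule assms(1))
  define H where "H = (\<lambda>x. comm_subgroup G N x)"
  define P where "P = (\<lambda>x. radicable_part G (H x))"
  define U where "U = (\<Union>x \<in> carrier G. P x)"
  have sN: "subgroup N G" using assms(3) normal_imp_subgroup by blast
  have Nc: "N \<subseteq> carrier G" using sN subgroup.subset by blast
  have nN: "\<And>g h. g \<in> carrier G \<Longrightarrow> h \<in> N \<Longrightarrow> g \<otimes> h \<otimes> inv g \<in> N"
    using assms(3) normal_inv_iff by blast
  have PF: "subgroup (P x) G \<and> P x \<subseteq> H x \<and> radicable G (P x) \<and> abelian_set G (P x)"
    if "x \<in> carrier G" for x
    unfolding P_def H_def using radpart_chernikov[OF assms(1) assms(4)[OF that]] .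
  define C where "C = (\<lambda>x. {commutator G a x | a. a \<in> N})"
  have HC: "H x = generate G (C x)" for x unfolding H_def C_def comm_subgroup_def ..
  have comm_c: "commutator G a x \<in> carrier G" if "a \<in> carrier G" "x \<in> carrier G" for a x
    unfolding commutator_def using that by simp
  have CN: "C x \<subseteq> N" if x: "x \<in> carrier G" for x
  proof
    fix c assume "c \<in> C x"
    then obtain a where a: "a \<in> N" "c = commutator G a x" unfolding C_def by blast
    have ac: "a \<in> carrier G" using a(1) Nc by blast
    have "inv x \<otimes> a \<otimes> inv (inv x) \<in> N" using nN[OF inv_closed[OF x] a(1)] .
    then have i: "inv x \<otimes> a \<otimes> x \<in> N" using x by simp
    have "c = inv a \<otimes> (inv x \<otimes> a \<otimes> x)" unfolding a(2) commutator_def using ac x by (simp add: m_assoc)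
    then show "c \<in> N" using subgroup.m_closed[OF sN subgroup.m_inv_closed[OF sN a(1)] i] by simp
  qed
  have Cc: "C x \<subseteq> carrier G" if "x \<in> carrier G" for x using CN[OF that] Nc by blast
  have HN: "H x \<subseteq> N" if "x \<in> carrier G" for x
    unfolding HC using generate_subgroup_incl[OF CN[OF that] sN] .
  have conjH: "g \<otimes> h \<otimes> inv g \<in> H (g \<otimes> x \<otimes> inv g)"
    if g: "g \<in> carrier G" and x: "x \<in> carrier G" and h: "h \<in> H x" for g x h
  proof -
    have x': "g \<otimes> x \<otimes> inv g \<in> carrier G" using g x by simp
    show ?thesis unfolding HC
    proof (rule conj_generate[OF Cc[OF x] Cc[OF x'] g])
      show "h \<in> generate G (C x)" using h HC by simp
    next
      fix c assume "c \<in> C x"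
      then obtain a where a: "a \<in> N" "c = commutator G a x" unfolding C_def by blast
      have ac: "a \<in> carrier G" using a(1) Nc by blast
      have "g \<otimes> c \<otimes> inv g = commutator G (g \<otimes> a \<otimes> inv g) (g \<otimes> x \<otimes> inv g)"
        unfolding a(2) using comm_conj[OF ac x g] by simp
      moreover have "g \<otimes> a \<otimes> inv g \<in> N" using nN[OF g a(1)] .
      ultimately have "g \<otimes> c \<otimes> inv g \<in> C (g \<otimes> x \<otimes> inv g)" unfolding C_def by blast
      then show "g \<otimes> c \<otimes> inv g \<in> generate G (C (g \<otimes> x \<otimes> inv g))" by (rule generate.incl)
    qed
  qed
  have NH: "inv b \<otimes> h \<otimes> b \<in> H x"
    if b: "b \<in> N" and x: "x \<in> carrier G" and h: "h \<in> H x" for b x h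
  proof -
    have bc: "b \<in> carrier G" using b Nc by blast
    have "inv b \<otimes> h \<otimes> inv (inv b) \<in> generate G (C x)"
    proof (rule conj_generate[OF Cc[OF x] Cc[OF x] inv_closed[OF bc]])
      show "h \<in> generate G (C x)" using h HC by simp
    next
      fix c assume "c \<in> C x"
      then obtain a where a: "a \<in> N" "c = commutator G a x" unfolding C_def by blast
      have ac: "a \<in> carrier G" using a(1) Nc by blast
      have e: "inv b \<otimes> c \<otimes> inv (inv b) = commutator G (a \<otimes> b) x \<otimes> inv (commutator G b x)"
        unfolding a(2) using comm_N[OF ac x bc] bc by simp
      have "a \<otimes> b \<in> N" using subgroup.m_closed[OF sN a(1) b] .
      then have m1: "commutator G (a \<otimes> b) x \<in> generate G (C x)"
        unfolding C_def by (intro generate.incl) blast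
      have "commutator G b x \<in> C x" unfolding C_def using b by blast
      then have m2: "inv (commutator G b x) \<in> generate G (C x)" by (rule generate.inv)
      show "inv b \<otimes> c \<otimes> inv (inv b) \<in> generate G (C x)"
        unfolding e using generate.eng[OF m1 m2] .
    qed
    then show ?thesis using bc HC by simp
  qed
  have Pc: "P x \<subseteq> carrier G" if "x \<in> carrier G" for x
    using PF[OF that] subgroup.subset by blast
  have conjP: "g \<otimes> u \<otimes> inv g \<in> P (g \<otimes> x \<otimes> inv g)"
    if g: "g \<in> carrier G" and x: "x \<in> carrier G" and u: "u \<in> P x" for g x u
  proof -
    define T where "T = (\<lambda>s. g \<otimes> s \<otimes> inv g) ` P x"
    have T: "subgroup T G \<and> radicable G T"
      unfolding T_def using conj_radicable_subgroup[of "P x" g] PF[OF x] g by blast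
    have "T \<subseteq> H (g \<otimes> x \<otimes> inv g)" unfolding T_def using conjH[OF g x] PF[OF x] by blast
    then have "T \<subseteq> P (g \<otimes> x \<otimes> inv g)" unfolding P_def radicable_part_def
      using T by (blast intro: generate.incl)
    moreover have "g \<otimes> u \<otimes> inv g \<in> T" unfolding T_def using u by (rule imageI)
    ultimately show ?thesis by blast
  qed
  have NP: "inv b \<otimes> u \<otimes> b \<in> P x"
    if b: "b \<in> N" and x: "x \<in> carrier G" and u: "u \<in> P x" for b x u
  proof -
    have bc: "b \<in> carrier G" using b Nc by blast
    define T where "T = (\<lambda>s. inv b \<otimes> s \<otimes> inv (inv b)) ` P x"
    have T: "subgroup T G \<and> radicable G T"
      unfolding T_def using conj_radicable_subgroup[of "P x" "inv b"] PF[OF x] bc by blast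
    have "T \<subseteq> H x" unfolding T_def using NH[OF b x] PF[OF x] bc by auto
    then have "T \<subseteq> P x" unfolding P_def radicable_part_def
      using T by (blast intro: generate.incl)
    moreover have "inv b \<otimes> u \<otimes> inv (inv b) \<in> T" unfolding T_def using u by (rule imageI)
    ultimately have "inv b \<otimes> u \<otimes> inv (inv b) \<in> P x" by (rule subsetD)
    then show ?thesis using bc by simp
  qed
  have PN: "P x \<subseteq> N" if "x \<in> carrier G" for x
    using conjunct1[OF conjunct2[OF PF[OF that]]] HN[OF that] by (rule subset_trans)
  have Uc: "U \<subseteq> carrier G" unfolding U_def using Pc by blast
  have comm: "u \<otimes> v = v \<otimes> u" if uv: "u \<in> U" "v \<in> U" for u v
  proof -
    obtain x where x: "x \<in> carrier G" "u \<in> P x" using uv(1) unfolding U_def by blast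
    obtain y where y: "y \<in> carrier G" "v \<in> P y" using uv(2) unfolding U_def by blast
    show ?thesis
    proof (rule commute_lemma)
      show "subgroup (P x) G" "subgroup (P y) G" "abelian_set G (P x)" "abelian_set G (P y)"
        "radicable G (P x)" using PF[OF x(1)] PF[OF y(1)] by simp_all
      show "u \<in> P x" "v \<in> P y" using x(2) y(2) by simp_all
    next
      fix d b assume d: "d \<in> P x" and b: "b \<in> P y"
      have bN: "b \<in> N" using PN[OF y(1)] b by (rule subsetD)
      show "inv b \<otimes> d \<otimes> b \<in> P x" using NP[OF bN x(1) d] .
    next
      fix d b assume d: "d \<in> P x" and b: "b \<in> P y"
      have dN: "d \<in> N" using PN[OF x(1)] d by (rule subsetD)
      show "inv d \<otimes> b \<otimes> d \<in> P y" using NP[OF dN y(1) b] .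
    next
      fix b assume "b \<in> P y"
      then have bc: "b \<in> carrier G" using Pc[OF y(1)] by (rule subsetD[rotated])
      show "\<exists>k::nat. k > 0 \<and> b [^] k = \<one>" using assms(2) bc unfolding periodic_group_def by (rule bspec)
    qed
  qed
  have normal: "generate G U \<lhd> G"
  proof (rule normal_generateI[OF Uc])
    fix h g assume h: "h \<in> U" and g: "g \<in> carrier G"
    obtain x where x: "x \<in> carrier G" "h \<in> P x" using h unfolding U_def by blast
    have "g \<otimes> x \<otimes> inv g \<in> carrier G" using g x(1) by simp
    then show "g \<otimes> h \<otimes> inv g \<in> U" unfolding U_def using conjP[OF g x(1) x(2)] by blast
  qed
  have ab: "abelian_set G (generate G U)" using gen_abelian[OF Uc comm] .
  have rad: "radicable G (generate G U)"
  proof (rule gen_radicable[OF Uc ab])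
    fix u and r :: nat assume u: "u \<in> U" and r: "r > 0"
    obtain x where x: "x \<in> carrier G" "u \<in> P x" using u unfolding U_def by blast
    obtain y where y: "y \<in> P x" "y [^] r = u"
      using PF[OF x(1)] x(2) r unfolding radicable_def by blast
    have "y \<in> generate G U" using y(1) x(1) unfolding U_def by (blast intro: generate.incl)
    then show "\<exists>y \<in> generate G U. y [^] r = u" using y(2) by blast
  qed
  have U_eq: "(\<Union>x \<in> carrier G. radicable_part G (comm_subgroup G N x)) = U"
    unfolding U_def P_def H_def ..
  show ?thesis unfolding U_eq by (intro conjI normal ab rad)
qed

end
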